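(* Let $X$ be a finite set with $|X|\ge 2$ and let $\rho:X\times X\to\mathbb{R}_{\geq 0}$ be a function such that $\rho(x,y)=0$ if and only if $x=y$. Let $$KR(\rho)=\mathrm{Conv}\Big\{ e_{x,y}:=\frac{e_x-e_y}{\rho(x,y)} \;\Big|\; x,y\in X,\ x\neq y\Big\}\subset V_0(X).$$ Then $\rho$ is a quasi-metric on $X$ if and only if none of the points $e_{x,y}$ ($x\neq y$) lies in the interior of $KR(\rho)$ (interior taken relative to $V_0(X)$).
   Context: $\{e_x\}_{x\in X}$ is the standard basis of $\mathbb{R}^X$, and $V_0(X)=\{\mu\in\mathbb{R}^X:\sum_{x}\mu(x)=0\}$. A quasi-metric (asymmetric distance function) is a function $\rho:X\times X\to\mathbb{R}_{\ge 0}$ such that $\rho(x,y)=0\iff x=y$ and $\rho(x,z)\le\rho(x,y)+\rho(y,z)$ for all $x,y,z\in X$; symmetry is not required. *)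

theory Defs
  imports "HOL-Analysis.Analysis"
begin

text \<open>The finite set X is a finite type 'a; R^X is real^'a; e_x is axis x 1.\<close>

definition V0 :: "(real^'a::finite) set" where
  "V0 = {\<mu>. (\<Sum>x\<in>UNIV. \<mu> $ x) = 0}"

definition exy :: "('a::finite \<Rightarrow> 'a \<Rightarrow> real) \<Rightarrow> 'a \<Rightarrow> 'a \<Rightarrow> real^'a" where
  "exy \<rho> x y = (1 / \<rho> x y) *\<^sub>R (axis x 1 - axis y 1)"

definition KR :: "('a::finite \<Rightarrow> 'a \<Rightarrow> real) \<Rightarrow> (real^'a) set" where
  "KR \<rho> = convex hull {exy \<rho> x y | x y. x \<noteq> y}"

definition quasi_metric :: "('a \<Rightarrow> 'a \<Rightarrow> real) \<Rightarrow> bool" where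
  "quasi_metric \<rho> \<longleftrightarrow> (\<forall>x y. \<rho> x y \<ge> 0) \<and> (\<forall>x y. \<rho> x y = 0 \<longleftrightarrow> x = y)
     \<and> (\<forall>x y z. \<rho> x z \<le> \<rho> x y + \<rho> y z)"

end

theory Submission
  imports Defs
begin

lemma exy_comp: "exy \<rho> u v $ i = (if i = u then 1 / \<rho> u v else 0) - (if i = v then 1 / \<rho> u v else 0)"
  by (simp add: exy_def axis_def)

lemma subspace_V0: "subspace (V0 :: (real^'a::finite) set)"
  unfolding subspace_def V0_def
  by (auto simp: sum.distrib sum_distrib_left[symmetric])

lemma axis_diff_V0: "(axis u 1 - axis v 1 :: real^'a::finite) \<in> V0"
  unfolding V0_def by (simp add: axis_def sum_subtractf)

lemma exy_V0: "exy \<rho> u v \<in> V0"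
  unfolding exy_def by (rule subspace_scale[OF subspace_V0 axis_diff_V0])

lemma KR_V0: "KR \<rho> \<subseteq> V0"
  unfolding KR_def
  by (rule hull_minimal) (auto simp: exy_V0 subspace_imp_convex[OF subspace_V0])

lemma inner_axis_diff: "F \<bullet> (axis u 1 - axis v 1 :: real^'a::finite) = F $ u - F $ v"
  by (simp add: inner_diff_right inner_axis)

lemma scale_exy: "\<rho> u v \<noteq> 0 \<Longrightarrow> \<rho> u v *\<^sub>R exy \<rho> u v = axis u 1 - axis v 1"
  by (simp add: exy_def)

lemma zero_rel_KR:
  fixes \<rho> :: "'a::finite \<Rightarrow> 'a \<Rightarrow> real"
  assumes pos: "\<And>u v. u \<noteq> v \<Longrightarrow> \<rho> u v > 0" and ex: "\<exists>u v::'a. u \<noteq> v"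
  shows "0 \<in> rel_interior (KR \<rho>)"
proof -
  define I where "I = {(u,v). (u::'a) \<noteq> v}"
  define S where "S = (\<lambda>(u,v). closed_segment (exy \<rho> u v) (exy \<rho> v u))"
  have fin: "finite I" by simp
  have ne: "I \<noteq> {}" using ex unfolding I_def by auto
  have cv: "convex (KR \<rho>)" unfolding KR_def by simp
  have eq: "KR \<rho> = convex hull (\<Union>(S ` I))"
  proof
    show "KR \<rho> \<subseteq> convex hull (\<Union>(S ` I))"
      unfolding KR_def
    proof (rule hull_mono, clarify)
      fix u v :: 'a assume "u \<noteq> v"
      then have "(u,v) \<in> I" by (simp add: I_def)
      moreover have "exy \<rho> u v \<in> S (u,v)" by (simp add: S_def)
      ultimately show "exy \<rho> u v \<in> \<Union>(S ` I)" by blast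
    qed
    show "convex hull (\<Union>(S ` I)) \<subseteq> KR \<rho>"
    proof (rule hull_minimal)
      show "convex (KR \<rho>)" by (rule cv)
      show "\<Union>(S ` I) \<subseteq> KR \<rho>"
      proof clarify
        fix u v p assume "(u,v) \<in> I" "p \<in> S (u,v)"
        then have "u \<noteq> v" "p \<in> closed_segment (exy \<rho> u v) (exy \<rho> v u)"
          by (auto simp: I_def S_def)
        moreover have "exy \<rho> u v \<in> KR \<rho>" "exy \<rho> v u \<in> KR \<rho>"
          using \<open>u \<noteq> v\<close> unfolding KR_def by (auto intro!: hull_inc)
        ultimately show "p \<in> KR \<rho>" using closed_segment_subset[OF _ _ cv] by blast
      qed
    qed
  qed
  have zero_open: "0 \<in> rel_interior (S i)" if "i \<in> I" for i
  proof -
    obtain u v where i0: "i = (u,v)" by (cases i)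
    have i: "i = (u,v)" "u \<noteq> v" using that i0 by (auto simp: I_def)
    have p1: "\<rho> u v > 0" "\<rho> v u > 0" using pos i(2) by auto
    have neq: "exy \<rho> u v \<noteq> exy \<rho> v u"
    proof
      assume "exy \<rho> u v = exy \<rho> v u"
      then have "exy \<rho> u v $ u = exy \<rho> v u $ u" by simp
      then have "1 / \<rho> u v = - (1 / \<rho> v u)" using i(2) by (simp add: exy_comp)
      moreover have "1 / \<rho> u v > 0" "1 / \<rho> v u > 0" using p1 by auto
      ultimately show False by linarith
    qed
    define t where "t = \<rho> v u / (\<rho> u v + \<rho> v u)"
    have t: "0 < t" "t < 1" using p1 by (auto simp: t_def field_simps)
    have "(1 - t) *\<^sub>R exy \<rho> u v + t *\<^sub>R exy \<rho> v u = 0"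
      using p1 i(2) by (simp add: vec_eq_iff exy_comp t_def field_simps)
    then have "0 \<in> open_segment (exy \<rho> u v) (exy \<rho> v u)"
      using neq t unfolding in_segment by metis
    then show ?thesis using neq by (simp add: i S_def rel_interior_closed_segment)
  qed
  have "\<forall>i\<in>I. convex (S i) \<and> S i \<noteq> {}" by (auto simp: S_def)
  note R = rel_interior_convex_hull_union[OF fin this]
  have cI: "card I > 0" using fin ne by (simp add: card_gt_0_iff)
  have "0 \<in> rel_interior (convex hull (\<Union>(S ` I)))"
    unfolding R mem_Collect_eq
  proof (intro exI conjI)
    show "(0::real^'a) = (\<Sum>i\<in>I. (\<lambda>_. 1 / real (card I)) i *\<^sub>R (\<lambda>_. 0) i)" by simp
    show "\<forall>i\<in>I. 0 < (\<lambda>_. 1 / real (card I)) i" using cI by simp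
    show "sum (\<lambda>_. 1 / real (card I)) I = 1" using cI ne by simp
    show "\<forall>i\<in>I. (\<lambda>_. 0::real^'a) i \<in> rel_interior (S i)" using zero_open by simp
  qed
  then show ?thesis using eq by simp
qed

lemma compA: "(\<Sum>u\<in>UNIV. (\<mu> $ u) *\<^sub>R (axis u 1 - axis v0 1 :: real^'a::finite)) $ i
   = (\<Sum>u\<in>UNIV. \<mu> $ u * ((if i = u then 1 else 0) - (if i = v0 then 1 else 0)))"
  unfolding sum_component vector_scaleR_component vector_minus_component
  by (simp add: axis_def)
lemma compB: "(\<Sum>u\<in>UNIV. \<mu> $ u * ((if i = u then 1 else 0) - (if i = v0 then 1 else 0)))
   = (\<Sum>u\<in>UNIV. \<mu> $ u * (if i = u then 1 else 0)) - (\<Sum>u\<in>UNIV. \<mu> $ u) * (if i = v0 then (1::real) else 0)"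
  by (simp only: right_diff_distrib sum_subtractf sum_distrib_right)
lemma compC: "(\<Sum>u\<in>UNIV. \<mu> $ u * (if i = u then 1 else 0)) = (\<mu> $ i :: real)"
  by (simp add: if_distrib cong: if_cong)

lemma affine_hull_KR:
  fixes \<rho> :: "'a::finite \<Rightarrow> 'a \<Rightarrow> real"
  assumes pos: "\<And>u v. u \<noteq> v \<Longrightarrow> \<rho> u v > 0" and z: "0 \<in> KR \<rho>"
  shows "affine hull (KR \<rho>) = V0"
proof -
  have ah: "affine hull (KR \<rho>) = span (KR \<rho>)"
    by (rule affine_hull_span_0, rule hull_inc, rule z)
  have "span (KR \<rho>) \<subseteq> V0" by (rule span_minimal[OF KR_V0 subspace_V0])
  moreover have "V0 \<subseteq> span (KR \<rho>)"
  proof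
    fix \<mu> :: "real^'a" assume m: "\<mu> \<in> V0"
    define v0 :: 'a where "v0 = undefined"
    have d: "axis u 1 - axis v0 1 \<in> span (KR \<rho>)" for u
    proof (cases "u = v0")
      case True then show ?thesis by (simp add: span_zero)
    next
      case False
      have "exy \<rho> u v0 \<in> KR \<rho>" unfolding KR_def using False by (auto intro!: hull_inc)
      then have "\<rho> u v0 *\<^sub>R exy \<rho> u v0 \<in> span (KR \<rho>)" by (intro span_scale span_base)
      then show ?thesis using pos[OF False] by (simp add: scale_exy)
    qed
    have comp: "(\<Sum>u\<in>UNIV. (\<mu> $ u) *\<^sub>R (axis u 1 - axis v0 1)) $ i = \<mu> $ i" for i
    proof -
      have "(\<Sum>u\<in>UNIV. (\<mu> $ u) *\<^sub>R (axis u 1 - axis v0 1)) $ i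
          = (\<Sum>u\<in>UNIV. \<mu> $ u * (if i = u then 1 else 0)) - (\<Sum>u\<in>UNIV. \<mu> $ u) * (if i = v0 then 1 else 0)"
        unfolding compA compB ..
      also have "\<dots> = \<mu> $ i" using m unfolding compC by (simp add: V0_def)
      finally show ?thesis .
    qed
    have "\<mu> = (\<Sum>u\<in>UNIV. (\<mu> $ u) *\<^sub>R (axis u 1 - axis v0 1))"
      unfolding vec_eq_iff using comp by metis
    also have "\<dots> \<in> span (KR \<rho>)" by (intro span_sum span_scale d)
    finally show "\<mu> \<in> span (KR \<rho>)" .
  qed
  ultimately show ?thesis using ah by auto
qed


lemma rel_eq_interior:
  fixes \<rho> :: "'a::finite \<Rightarrow> 'a \<Rightarrow> real"
  assumes "affine hull (KR \<rho>) = V0"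
  shows "rel_interior (KR \<rho>) = (top_of_set V0) interior_of (KR \<rho>)"
  using assms by (simp add: rel_interior_def interior_of_def)

theorem mainTheorem1:
  fixes \<rho> :: "'a::finite \<Rightarrow> 'a \<Rightarrow> real"
  assumes "CARD('a) \<ge> 2"
    and "\<forall>x y. \<rho> x y \<ge> 0"
    and "\<forall>x y. \<rho> x y = 0 \<longleftrightarrow> x = y"
  shows "quasi_metric \<rho> \<longleftrightarrow>
    (\<forall>x y. x \<noteq> y \<longrightarrow> exy \<rho> x y \<notin> (top_of_set V0) interior_of (KR \<rho>))"
proof -
  have pos: "\<rho> u v > 0" if "u \<noteq> v" for u v
    using assms(2,3) that by (metis less_eq_real_def)
  have z0: "\<rho> u u = 0" for u using assms(3) by simp
  have ex: "\<exists>u v::'a. u \<noteq> v"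
  proof (rule ccontr)
    assume "\<not> ?thesis"
    then have "(UNIV::'a set) \<subseteq> {undefined}" by auto
    then have "CARD('a) \<le> 1" using card_mono[of "{undefined}" UNIV] by simp
    then show False using assms(1) by simp
  qed
  have r0: "0 \<in> rel_interior (KR \<rho>)"
  proof (rule zero_rel_KR)
    show "\<And>u v. u \<noteq> v \<Longrightarrow> \<rho> u v > 0" by (rule pos)
  qed (rule ex)
  have ah: "affine hull (KR \<rho>) = V0"
  proof (rule affine_hull_KR)
    show "\<And>u v. u \<noteq> v \<Longrightarrow> \<rho> u v > 0" by (rule pos)
    show "0 \<in> KR \<rho>" using r0 rel_interior_subset by blast
  qed
  have RI: "rel_interior (KR \<rho>) = (top_of_set V0) interior_of (KR \<rho>)"
    using rel_eq_interior[OF ah] .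
  have cv: "convex (KR \<rho>)" unfolding KR_def by simp
  show ?thesis
  proof
    assume qm: "quasi_metric \<rho>"
    then have tri: "\<rho> x z \<le> \<rho> x y + \<rho> y z" for x y z unfolding quasi_metric_def by blast
    show "\<forall>x y. x \<noteq> y \<longrightarrow> exy \<rho> x y \<notin> (top_of_set V0) interior_of (KR \<rho>)"
    proof (intro allI impI notI)
      fix x y assume xy: "x \<noteq> y" and ein: "exy \<rho> x y \<in> (top_of_set V0) interior_of (KR \<rho>)"
      obtain T where T: "openin (top_of_set V0) T" "exy \<rho> x y \<in> T" "T \<subseteq> KR \<rho>"
        using ein unfolding interior_of_def by blast
      obtain \<epsilon> where eps: "\<epsilon> > 0" "\<forall>x'\<in>V0. dist x' (exy \<rho> x y) < \<epsilon> \<longrightarrow> x' \<in> T"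
        using T(1,2) unfolding openin_euclidean_subtopology_iff by blast
      define d :: "real^'a" where "d = axis x 1 - axis y 1"
      have "d $ x = 1" using xy by (simp add: d_def axis_def)
      then have dn: "d \<noteq> 0" by auto
      then have nd: "norm d > 0" by simp
      define t where "t = \<epsilon> / (2 * norm d)"
      have t: "t > 0" using eps(1) nd by (simp add: t_def)
      define p where "p = exy \<rho> x y + t *\<^sub>R d"
      have "p \<in> V0" unfolding p_def d_def
        by (intro subspace_add[OF subspace_V0] subspace_scale[OF subspace_V0] exy_V0 axis_diff_V0)
      moreover have "dist p (exy \<rho> x y) < \<epsilon>"
      proof -
        have "dist p (exy \<rho> x y) = t * norm d" using t by (simp add: p_def dist_norm)
        also have "\<dots> = \<epsilon> / 2" using nd by (simp add: t_def)
        finally show ?thesis using eps(1) by simp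
      qed
      ultimately have pK: "p \<in> KR \<rho>" using eps(2) T(3) by blast
      define F :: "real^'a" where "F = (\<chi> z. \<rho> z y)"
      have Fe: "F \<bullet> exy \<rho> u v \<le> 1" if "u \<noteq> v" for u v
      proof -
        have "F \<bullet> exy \<rho> u v = (\<rho> u y - \<rho> v y) / \<rho> u v"
          by (simp add: exy_def inner_axis_diff F_def)
        also have "\<dots> \<le> 1" using pos[OF that] tri[where x=u and y=v and z=y] by (simp add: divide_le_eq)
        finally show ?thesis .
      qed
      have "KR \<rho> \<subseteq> {q. F \<bullet> q \<le> 1}"
        unfolding KR_def by (rule hull_minimal) (auto simp: convex_halfspace_le Fe)
      then have "F \<bullet> p \<le> 1" using pK by blast
      moreover have "F \<bullet> exy \<rho> x y = 1"
        using pos[OF xy] z0[of y] by (simp add: exy_def inner_axis_diff F_def)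
      moreover have "F \<bullet> d = \<rho> x y" using z0[of y] by (simp add: d_def inner_axis_diff F_def)
      ultimately have "1 + t * \<rho> x y \<le> 1" by (simp add: p_def inner_add_right)
      then show False using t pos[OF xy] by (simp add: add_le_same_cancel1 mult_le_0_iff)
    qed
  next
    assume H: "\<forall>x y. x \<noteq> y \<longrightarrow> exy \<rho> x y \<notin> (top_of_set V0) interior_of (KR \<rho>)"
    show "quasi_metric \<rho>"
    proof (rule ccontr)
      assume "\<not> quasi_metric \<rho>"
      then obtain x y z where bad: "\<rho> x z > \<rho> x y + \<rho> y z"
        using assms(2,3) unfolding quasi_metric_def by (meson not_le)
      have nn: "\<rho> x y \<ge> 0" "\<rho> y z \<ge> 0" using assms(2) by auto
      have xz: "x \<noteq> z" using bad nn z0[of x] by auto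
      have xy: "x \<noteq> y" using bad nn z0[of x] by auto
      have yz: "y \<noteq> z" using bad nn z0[of z] by auto
      define s where "s = \<rho> x y + \<rho> y z"
      have s: "s > 0" using pos[OF xy] pos[OF yz] by (simp add: s_def)
      define w where "w = (\<rho> x y / s) *\<^sub>R exy \<rho> x y + (\<rho> y z / s) *\<^sub>R exy \<rho> y z"
      have wK: "w \<in> KR \<rho>"
      proof -
        have "exy \<rho> x y \<in> KR \<rho>" "exy \<rho> y z \<in> KR \<rho>"
          using xy yz unfolding KR_def by (auto intro!: hull_inc)
        moreover have "\<rho> x y / s + \<rho> y z / s = 1" using s by (simp add: s_def add_divide_distrib[symmetric])
        ultimately show ?thesis unfolding w_def
          using convexD[OF cv] nn s by simp
      qed
      define l where "l = s / \<rho> x z"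
      have l: "0 < l" "l < 1" using s bad pos[OF xz] by (auto simp: l_def s_def)
      have c1: "l * (\<rho> x y / s) = (1 / \<rho> x z) * \<rho> x y" "l * (\<rho> y z / s) = (1 / \<rho> x z) * \<rho> y z"
        using s by (simp_all add: l_def)
      have "l *\<^sub>R w = (1 / \<rho> x z) *\<^sub>R (\<rho> x y *\<^sub>R exy \<rho> x y + \<rho> y z *\<^sub>R exy \<rho> y z)"
        unfolding w_def scaleR_add_right scaleR_scaleR c1 by (rule refl)
      also have "\<dots> = (1 / \<rho> x z) *\<^sub>R (axis x 1 - axis z 1)"
        using scale_exy[of \<rho> x y] scale_exy[of \<rho> y z] pos[OF xy] pos[OF yz] by simp
      also have "\<dots> = exy \<rho> x z" by (simp add: exy_def)
      finally have lw: "l *\<^sub>R w = exy \<rho> x z" .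
      have "w - (1 - l) *\<^sub>R (w - 0) \<in> rel_interior (KR \<rho>)"
        by (rule rel_interior_convex_shrink[OF cv r0 wK]) (use l in auto)
      moreover have "w - (1 - l) *\<^sub>R (w - 0) = l *\<^sub>R w" by (simp add: algebra_simps)
      ultimately have "exy \<rho> x z \<in> (top_of_set V0) interior_of (KR \<rho>)" using lw RI by simp
      then show False using H xz by blast
    qed
  qed
qed

end
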